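(* Consider the generalized linear model described in the context with a predetermined set of distinct design points $\{\mathbf{x}_1,\ldots,\mathbf{x}_m\}\subset\mathbb{R}^d$, $d\ge1$, and $m>p\ge2$. Then (i) an A-optimal allocation that maximizes $h(\mathbf{w})$, $\mathbf{w}\in S_m$, exists; (ii) the set of A-optimal allocations is convex; and (iii) if $\mathbf{w}_*=(w_1^*,\ldots,w_m^* )^T\in S_m$ satisfies $f(\mathbf{w}_* )>0$, then $\mathbf{w}_*$ is A-optimal among $S_m$ if and only if, for each $i=1,\ldots,m$, $w_i^*$ maximizes $h_i(x)$, $x\in[0,1]$, where $h_i$ is associated with $\mathbf{w}_*$.
   Context: Generalized linear model (GLM): independent responses $Y_i$ from a one-parameter exponential family with $E(Y_i)=\mu_i$ and $\eta_i=g(\mu_i)=\mathbf{q}(\mathbf{x}_i)^T\boldsymbol\beta$, where $g$ is the link function, $\mathbf{q}(\mathbf{x})=(q_1(\mathbf{x}),\ldots,q_p(\mathbf{x}))^T$ are predictor functions, and $\boldsymbol\beta\in\mathbb{R}^p$ is a fixed (assumed) parameter vector. Let $\nu_i=(\partial\mu_i/\partial\eta_i)^2/\mathrm{Var}(Y_i)\ge0$ and $\mathbf{X}=(\mathbf{q}(\mathbf{x}_1),\ldots,\mathbf{q}(\mathbf{x}_m))^T$. Let $S_m=\{\mathbf{w}\in\mathbb{R}^m:w_i\ge0,\sum_iw_i=1\}$, $\mathbf{W}=\mathrm{diag}\{w_1\nu_1,\ldots,w_m\nu_m\}$, $f(\mathbf{w})=|\mathbf{X}^T\mathbf{W}\mathbf{X}|$,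 and $h(\mathbf{w})=[\mathrm{tr}((\mathbf{X}^T\mathbf{W}\mathbf{X})^{-1})]^{-1}$ if $f(\mathbf{w})>0$, $h(\mathbf{w})=0$ otherwise; $\mathbf{w}$ is A-optimal if it maximizes $h$ over $S_m$. For $\mathbf{w}$ and $i$ with $0\le w_i<1$, $h_i(x)=h\big(\tfrac{1-x}{1-w_i}w_1,\ldots,\tfrac{1-x}{1-w_i}w_{i-1},x,\tfrac{1-x}{1-w_i}w_{i+1},\ldots,\tfrac{1-x}{1-w_i}w_m\big)$ for $x\in[0,1]$ (the function $h_i$ "associated with $\mathbf{w}$"). *)

theory Defs
  imports "HOL-Analysis.Analysis"
begin

text \<open>Design index type 'm (m = CARD('m) design points), parameter index type 'p
  (p = CARD('p)), covariate dimension type 'd (d = CARD('d)).\<close>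

definition design_matrix :: "(real^'d \<Rightarrow> real^'p) \<Rightarrow> ('m \<Rightarrow> real^'d) \<Rightarrow> real^'p^'m" where
  "design_matrix q x = (\<chi> i. q (x i))"

definition alloc_simplex :: "(real^'m) set" where
  "alloc_simplex = {w. (\<forall>i. 0 \<le> w $ i) \<and> (\<Sum>i\<in>UNIV. w $ i) = 1}"

definition weight_matrix :: "('m \<Rightarrow> real) \<Rightarrow> real^'m \<Rightarrow> real^'m^'m" where
  "weight_matrix nu w = (\<chi> i j. if i = j then w $ i * nu i else 0)"

definition info_matrix :: "(real^'d \<Rightarrow> real^'p) \<Rightarrow> ('m \<Rightarrow> real^'d) \<Rightarrow> ('m \<Rightarrow> real) \<Rightarrow> real^'m \<Rightarrow> real^'p^'p" where
  "info_matrix q x nu w =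
     transpose (design_matrix q x) ** weight_matrix nu w ** design_matrix q x"

definition f_obj :: "(real^'d \<Rightarrow> real^'p) \<Rightarrow> ('m \<Rightarrow> real^'d) \<Rightarrow> ('m \<Rightarrow> real) \<Rightarrow> real^'m \<Rightarrow> real" where
  "f_obj q x nu w = det (info_matrix q x nu w)"

definition h_obj :: "(real^'d \<Rightarrow> real^'p) \<Rightarrow> ('m \<Rightarrow> real^'d) \<Rightarrow> ('m \<Rightarrow> real) \<Rightarrow> real^'m \<Rightarrow> real" where
  "h_obj q x nu w =
     (if f_obj q x nu w > 0 then inverse (trace (matrix_inv (info_matrix q x nu w))) else 0)"

definition A_optimal :: "(real^'d \<Rightarrow> real^'p) \<Rightarrow> ('m \<Rightarrow> real^'d) \<Rightarrow> ('m \<Rightarrow> real) \<Rightarrow> real^'m \<Rightarrow> bool" where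
  "A_optimal q x nu w \<longleftrightarrow> w \<in> alloc_simplex \<and> (\<forall>v\<in>alloc_simplex. h_obj q x nu v \<le> h_obj q x nu w)"

text \<open>h_i(z) associated with w: coordinate i set to z, the others rescaled by (1-z)/(1-w_i).
  (Only meaningful when w_i < 1.)\<close>
definition h_assoc :: "(real^'d \<Rightarrow> real^'p) \<Rightarrow> ('m \<Rightarrow> real^'d) \<Rightarrow> ('m \<Rightarrow> real) \<Rightarrow> real^'m \<Rightarrow> 'm \<Rightarrow> real \<Rightarrow> real" where
  "h_assoc q x nu w i z =
     h_obj q x nu (\<chi> j. if j = i then z else (1 - z) / (1 - w $ i) * w $ j)"

end

theory Submission
  imports Defs
begin


definition psd :: "real^'n^'n \<Rightarrow> bool" where
  "psd M \<longleftrightarrow> (\<forall>y. 0 \<le> y \<bullet> (M *v y))"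
definition pd :: "real^'n^'n \<Rightarrow> bool" where
  "pd M \<longleftrightarrow> (\<forall>y. y \<noteq> 0 \<longrightarrow> 0 < y \<bullet> (M *v y))"

lemma inv_props:
  fixes A :: "real^'n^'n"
  assumes "invertible A"
  shows "A ** matrix_inv A = mat 1" "matrix_inv A ** A = mat 1"
  using someI_ex[OF assms[unfolded invertible_def]] unfolding matrix_inv_def by auto

lemma inv_unique:
  fixes A B :: "real^'n^'n"
  assumes "A ** B = mat 1"
  shows "matrix_inv A = B" "invertible A"
proof -
  have BA: "B ** A = mat 1" using assms matrix_left_right_inverse by blast
  show inv: "invertible A" unfolding invertible_def using assms BA by blast
  have "matrix_inv A = (B ** A) ** matrix_inv A" by (simp add: BA)
  also have "\<dots> = B ** (A ** matrix_inv A)" by (simp add: matrix_mul_assoc)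
  also have "\<dots> = B" using inv_props[OF inv] by simp
  finally show "matrix_inv A = B" .
qed

lemma pd_invertible:
  fixes M :: "real^'n^'n"
  assumes "pd M" shows "invertible M"
proof -
  have "\<forall>x. M *v x = 0 \<longrightarrow> x = 0"
    using assms unfolding pd_def by (metis inner_zero_right less_irrefl)
  then obtain B where "B ** M = mat 1" using matrix_left_invertible_ker by blast
  then show ?thesis unfolding invertible_def using matrix_left_right_inverse by blast
qed

lemma sym_psd_zero:
  fixes M :: "real^'n^'n"
  assumes s: "transpose M = M" and p: "psd M" and y: "y \<bullet> (M *v y) = 0"
  shows "M *v y = 0"
proof -
  define z where "z = M *v y"
  define a where "a = z \<bullet> (M *v z)"
  define b where "b = z \<bullet> (M *v y)"
  have ysym: "y \<bullet> (M *v z) = b"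
  proof -
    have "y \<bullet> (M *v z) = (y v* M) \<bullet> z" by (simp add: dot_lmul_matrix)
    also have "y v* M = transpose M *v y" by (metis transpose_matrix_vector)
    finally show ?thesis using s b_def by (simp add: inner_commute)
  qed
  have a0: "0 \<le> a" using p unfolding psd_def a_def by auto
  have key: "0 \<le> 2 * t * b + t^2 * a" for t
  proof -
    have "0 \<le> (y + t *\<^sub>R z) \<bullet> (M *v (y + t *\<^sub>R z))" using p unfolding psd_def by auto
    also have "\<dots> = y \<bullet> (M *v y) + t * (y \<bullet> (M *v z)) + t * (z \<bullet> (M *v y)) + t^2 * a"
      by (simp add: matrix_vector_right_distrib matrix_vector_mult_scaleR inner_add_left inner_add_right a_def power2_eq_square algebra_simps)
    finally show ?thesis using y ysym b_def by simp
  qed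
  have "b = 0"
  proof (rule ccontr)
    assume "b \<noteq> 0"
    define t where "t = - b / (a + 1)"
    have k: "0 \<le> 2 * t * b + t^2 * a" by (rule key)
    have ta: "t * (a+1) = -b" using a0 unfolding t_def by (simp add: field_simps)
    have e1: "(2 * t * b + t^2 * a) * (a+1)^2 = 2*b*(t*(a+1))*(a+1) + a*(t*(a+1))^2"
      by (simp add: power2_eq_square algebra_simps)
    have e2: "2*b*(t*(a+1))*(a+1) + a*(t*(a+1))^2 = - (b^2 * (a + 2))" unfolding ta
      by (simp add: power2_eq_square algebra_simps)
    have n: "- (b^2 * (a + 2)) < 0" using a0 \<open>b \<noteq> 0\<close> by (simp add: add_nonneg_pos)
    have p: "(a+1)^2 > 0" using a0 by simp
    from k p have "0 \<le> (2 * t * b + t^2 * a) * (a+1)^2" by simp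
    then show False using e1 e2 n by linarith
  qed
  then have "z \<bullet> z = 0" unfolding b_def z_def by simp
  then show ?thesis unfolding z_def by simp
qed

lemma psd_inv_pd:
  fixes M :: "real^'n^'n"
  assumes "transpose M = M" "psd M" "invertible M"
  shows "pd M"
  unfolding pd_def
proof (intro allI impI)
  fix y :: "real^'n" assume "y \<noteq> 0"
  have "M *v y \<noteq> 0"
    using inj_matrix_vector_mult[OF assms(3)] \<open>y \<noteq> 0\<close>
    by (metis injD matrix_vector_mult_0_right)
  then have "y \<bullet> (M *v y) \<noteq> 0" using sym_psd_zero[OF assms(1,2)] by blast
  moreover have "0 \<le> y \<bullet> (M *v y)" using assms(2) unfolding psd_def by auto
  ultimately show "0 < y \<bullet> (M *v y)" by linarith
qed

lemma scaleR_mv: "((c::real) *\<^sub>R (A::real^'n^'m)) *v y = c *\<^sub>R (A *v y)"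
  by (simp add: vec_eq_iff matrix_vector_mult_def sum_distrib_left mult.assoc)

lemma pd_det_pos:
  fixes M :: "real^'n^'n"
  assumes "pd M" shows "det M > 0"
proof (rule ccontr)
  assume "\<not> det M > 0"
  define C where "C t = (1 - t) *\<^sub>R (mat 1 :: real^'n^'n) + t *\<^sub>R M" for t :: real
  define g where "g t = det (C t)" for t
  have cont: "continuous_on {0..1} g"
    unfolding g_def det_def C_def
    by (intro continuous_intros)
  have g0: "g 0 = 1" unfolding g_def C_def by simp
  have g1: "g 1 \<le> 0" using \<open>\<not> det M > 0\<close> unfolding g_def C_def by simp
  obtain t where t: "0 \<le> t" "t \<le> 1" "g t = 0"
    using IVT2'[of g 1 0 0] cont g0 g1 by auto
  have "pd (C t)" unfolding pd_def
  proof (intro allI impI)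
    fix y :: "real^'n" assume y: "y \<noteq> 0"
    have e: "y \<bullet> (C t *v y) = (1 - t) * (y \<bullet> y) + t * (y \<bullet> (M *v y))"
      unfolding C_def by (simp add: matrix_vector_right_distrib matrix_vector_mult_scaleR
          matrix_vector_mul_lid inner_add_right scaleR_add_left matrix_vector_mult_add_rdistrib scaleR_mv)
    have "0 < y \<bullet> y" using y by simp
    moreover have "0 < y \<bullet> (M *v y)" using y assms unfolding pd_def by auto
    ultimately show "0 < y \<bullet> (C t *v y)" using t
    proof (cases "t = 1")
      case False
      then have "0 < (1 - t) * (y \<bullet> y)" using t \<open>0 < y \<bullet> y\<close> by simp
      moreover have "0 \<le> t * (y \<bullet> (M *v y))" using t \<open>0 < y \<bullet> (M *v y)\<close> by simp
      ultimately show ?thesis using e by linarith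
    qed (use e in simp)
  qed
  then have "det (C t) \<noteq> 0" using pd_invertible invertible_det_nz by blast
  then show False using t(3) unfolding g_def by simp
qed

lemma inv_sym:
  fixes M :: "real^'n^'n"
  assumes "transpose M = M" "invertible M"
  shows "transpose (matrix_inv M) = matrix_inv M"
proof -
  have "transpose (matrix_inv M) ** M = mat 1"
    using inv_props(1)[OF assms(2)] assms(1)
    by (metis matrix_transpose_mul transpose_mat)
  then have "M ** transpose (matrix_inv M) = mat 1" using matrix_left_right_inverse by blast
  then show ?thesis using inv_unique(1) by metis
qed

lemma pd_inv:
  fixes M :: "real^'n^'n"
  assumes "pd M" shows "pd (matrix_inv M)"
  unfolding pd_def
proof (intro allI impI)
  fix y :: "real^'n" assume y: "y \<noteq> 0"
  have inv: "invertible M" using pd_invertible assms by blast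
  define z where "z = matrix_inv M *v y"
  have Mz: "M *v z = y" unfolding z_def using inv_props(1)[OF inv]
    by (simp add: matrix_vector_mul_assoc)
  then have "z \<noteq> 0" using y by auto
  then have "0 < z \<bullet> (M *v z)" using assms unfolding pd_def by auto
  then show "0 < y \<bullet> (matrix_inv M *v y)" using Mz unfolding z_def[symmetric]
    by (simp add: inner_commute)
qed

lemma pd_trace_pos:
  fixes P :: "real^'n^'n"
  assumes "pd P" shows "trace P > 0"
proof -
  have "P $ k $ k = axis k 1 \<bullet> (P *v axis k 1)" for k
    by (simp add: matrix_vector_mult_basis column_def inner_commute[of "axis k 1"] inner_axis)
  moreover have "axis k 1 \<bullet> (P *v axis k 1) > 0" for k :: 'n
    using assms unfolding pd_def by (simp add: axis_eq_0_iff)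
  ultimately show ?thesis unfolding trace_def
    by (simp add: sum_pos)
qed



lemma sym_inner:
  fixes M :: "real^'n^'n"
  assumes "transpose M = M"
  shows "a \<bullet> (M *v c) = (M *v a) \<bullet> c"
  by (metis assms dot_lmul_matrix transpose_matrix_vector)

lemma col_comp: "((A::real^'n^'n) *v axis k 1) $ k = A $ k $ k"
  by (simp add: matrix_vector_mult_basis column_def)

lemma min1M:
  fixes M A :: "real^'n^'n"
  assumes s: "transpose M = M" and p: "psd M" and i: "invertible M" and tA: "trace A = 1"
  shows "inverse (trace (matrix_inv M)) \<le> (\<Sum>k\<in>UNIV. (A *v axis k 1) \<bullet> (M *v (A *v axis k 1)))"
proof -
  define P where "P = matrix_inv M"
  define T where "T = trace P"
  have T0: "T > 0" unfolding T_def P_def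
    using pd_trace_pos pd_inv psd_inv_pd[OF s p i] by blast
  have MP: "M ** P = mat 1" using inv_props(1)[OF i] P_def by simp
  have Ma: "M *v ((1/T) *\<^sub>R (P *v axis k 1)) = (1/T) *\<^sub>R axis k 1" for k
    by (simp add: matrix_vector_mult_scaleR matrix_vector_mul_assoc MP)
  have each: "(A *v axis k 1) \<bullet> (M *v (A *v axis k 1)) \<ge> 2 * A$k$k / T - P$k$k / T^2" for k
  proof -
    define c where "c = A *v axis k 1"
    define a where "a = (1/T) *\<^sub>R (P *v axis k 1)"
    have "0 \<le> (c - a) \<bullet> (M *v (c - a))" using p unfolding psd_def by auto
    also have "\<dots> = c \<bullet> (M *v c) - c \<bullet> (M *v a) - a \<bullet> (M *v c) + a \<bullet> (M *v a)"
      by (simp add: matrix_vector_mult_diff_distrib inner_diff_left inner_diff_right)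
    also have "a \<bullet> (M *v c) = c \<bullet> (M *v a)" using sym_inner[OF s, of a c] by (simp add: inner_commute)
    also have "c \<bullet> (M *v a) = A$k$k / T" unfolding a_def Ma c_def
      by (simp add: inner_axis col_comp)
    also have "a \<bullet> (M *v a) = P$k$k / T^2" unfolding a_def Ma
      by (simp add: inner_axis col_comp power2_eq_square)
    finally show ?thesis unfolding c_def by simp
  qed
  have "(\<Sum>k\<in>UNIV. 2 * A$k$k / T - P$k$k / T^2) = 2 * trace A / T - trace P / T^2"
    by (simp add: trace_def sum_subtractf sum_divide_distrib sum_distrib_left)
  also have "\<dots> = inverse T" using T0 tA unfolding T_def[symmetric]
    by (simp add: field_simps power2_eq_square)
  finally have "inverse T = (\<Sum>k\<in>UNIV. 2 * A$k$k / T - P$k$k / T^2)" ..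
  also have "\<dots> \<le> (\<Sum>k\<in>UNIV. (A *v axis k 1) \<bullet> (M *v (A *v axis k 1)))"
    by (rule sum_mono) (rule each)
  finally show ?thesis unfolding T_def P_def .
qed

lemma min2M_inv:
  fixes M :: "real^'n^'n"
  assumes s: "transpose M = M" and p: "psd M" and i: "invertible M"
  defines "A \<equiv> (1 / trace (matrix_inv M)) *\<^sub>R matrix_inv M"
  shows "trace A = 1"
    "(\<Sum>k\<in>UNIV. (A *v axis k 1) \<bullet> (M *v (A *v axis k 1))) = inverse (trace (matrix_inv M))"
proof -
  define P where "P = matrix_inv M"
  define T where "T = trace P"
  have T0: "T > 0" unfolding T_def P_def
    using pd_trace_pos pd_inv psd_inv_pd[OF s p i] by blast
  have MP: "M ** P = mat 1" using inv_props(1)[OF i] P_def by simp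
  have A: "A = (1/T) *\<^sub>R P" unfolding A_def T_def P_def ..
  have tr: "trace ((c::real) *\<^sub>R B) = c * trace B" for c and B :: "real^'n^'n"
    by (simp add: trace_def sum_distrib_left)
  show "trace A = 1" unfolding A using T0 tr T_def by (simp add: inverse_eq_divide)
  have "(A *v axis k 1) \<bullet> (M *v (A *v axis k 1)) = P$k$k / T^2" for k
    unfolding A scaleR_mv
    by (simp add: matrix_vector_mult_scaleR matrix_vector_mul_assoc MP inner_axis col_comp power2_eq_square)
  then have "(\<Sum>k\<in>UNIV. (A *v axis k 1) \<bullet> (M *v (A *v axis k 1))) = trace P / T^2"
    by (simp add: trace_def sum_divide_distrib)
  also have "\<dots> = inverse T" using T0 unfolding T_def[symmetric] by (simp add: power2_eq_square inverse_eq_divide)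
  finally show "(\<Sum>k\<in>UNIV. (A *v axis k 1) \<bullet> (M *v (A *v axis k 1))) = inverse (trace (matrix_inv M))"
    unfolding T_def P_def .
qed

lemma min2M_sing:
  fixes M :: "real^'n^'n"
  assumes "\<not> invertible M"
  shows "\<exists>A. trace A = 1 \<and> (\<Sum>k\<in>UNIV. (A *v axis k 1) \<bullet> (M *v (A *v axis k 1))) = 0"
proof -
  have "\<not> (\<forall>x. M *v x = 0 \<longrightarrow> x = 0)"
  proof
    assume "\<forall>x. M *v x = 0 \<longrightarrow> x = 0"
    then obtain B where "B ** M = mat 1" using matrix_left_invertible_ker by blast
    then show False using assms unfolding invertible_def using matrix_left_right_inverse by blast
  qed
  then obtain v where v: "M *v v = 0" "v \<noteq> 0" by blast
  define A :: "real^'n^'n" where "A = (\<chi> a b. v$a * v$b / (v \<bullet> v))"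
  have vv: "v \<bullet> v > 0" using v by simp
  have "trace A = (\<Sum>a\<in>UNIV. v$a * v$a) / (v \<bullet> v)"
    unfolding A_def trace_def by (simp add: sum_divide_distrib)
  also have "\<dots> = 1" using vv by (simp add: inner_vec_def)
  finally have t: "trace A = 1" .
  have "A *v axis k 1 = (v$k / (v \<bullet> v)) *\<^sub>R v" for k
    unfolding matrix_vector_mult_basis A_def column_def by (simp add: vec_eq_iff)
  then have "(A *v axis k 1) \<bullet> (M *v (A *v axis k 1)) = 0" for k
    by (simp add: matrix_vector_mult_scaleR v)
  then show ?thesis using t by auto
qed



lemma design_mv: "design_matrix q x *v y = (\<chi> j. q (x j) \<bullet> y)"
  by (simp add: vec_eq_iff design_matrix_def matrix_vector_mult_def inner_vec_def)

lemma weight_mv: "weight_matrix nu w *v z = (\<chi> j. w$j * nu j * z$j)"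
  by (simp add: vec_eq_iff weight_matrix_def matrix_vector_mult_def if_distrib[where f="\<lambda>a. a * _"] cong: if_cong)

lemma designT_mv: "transpose (design_matrix q x) *v u = (\<Sum>j\<in>UNIV. (u$j) *\<^sub>R q (x j))"
  by (simp add: vec_eq_iff design_matrix_def matrix_vector_mult_def transpose_def mult.commute)

lemma info_mv:
  "info_matrix q x nu w *v y = (\<Sum>j\<in>UNIV. (w$j * nu j * (q (x j) \<bullet> y)) *\<^sub>R q (x j))"
  unfolding info_matrix_def matrix_vector_mul_assoc[symmetric] design_mv weight_mv designT_mv
  by simp

lemma info_qf:
  "y \<bullet> (info_matrix q x nu w *v y) = (\<Sum>j\<in>UNIV. w$j * nu j * (q (x j) \<bullet> y)^2)"
  unfolding info_mv by (simp add: inner_sum_right power2_eq_square inner_commute mult.assoc)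

lemma info_sym: "transpose (info_matrix q x nu w) = info_matrix q x nu w"
proof -
  have W: "transpose (weight_matrix nu w) = weight_matrix nu w"
    by (simp add: vec_eq_iff weight_matrix_def transpose_def)
  show ?thesis unfolding info_matrix_def
    by (simp add: matrix_transpose_mul W matrix_mul_assoc)
qed

lemma info_psd:
  assumes "\<And>j. 0 \<le> w$j" "\<And>j. 0 \<le> nu j"
  shows "psd (info_matrix q x nu w)"
  unfolding psd_def info_qf using assms by (auto intro!: sum_nonneg)



definition LA :: "(real^'d \<Rightarrow> real^'p) \<Rightarrow> ('m::finite \<Rightarrow> real^'d) \<Rightarrow> ('m \<Rightarrow> real) \<Rightarrow> real^'p^'p \<Rightarrow> real^'m \<Rightarrow> real" where
  "LA q x nu A w = (\<Sum>k\<in>UNIV. (A *v axis k 1) \<bullet> (info_matrix q x nu w *v (A *v axis k 1)))"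

definition KA :: "(real^'d \<Rightarrow> real^'p) \<Rightarrow> ('m::finite \<Rightarrow> real^'d) \<Rightarrow> ('m \<Rightarrow> real) \<Rightarrow> real^'p^'p \<Rightarrow> 'm \<Rightarrow> real" where
  "KA q x nu A j = nu j * (\<Sum>k\<in>UNIV. (q (x j) \<bullet> (A *v axis k 1))^2)"

lemma LA_lin: "LA q x nu A w = (\<Sum>j\<in>UNIV. w$j * KA q x nu A j)"
  unfolding LA_def KA_def info_qf
  by (subst sum.swap) (simp add: sum_distrib_left mult.assoc)

lemma KA_nonneg: "(\<And>j. 0 \<le> nu j) \<Longrightarrow> 0 \<le> KA q x nu A j"
  unfolding KA_def by (simp add: sum_nonneg)

lemma h_obj_alt: "h_obj q x nu w =
  (if det (info_matrix q x nu w) > 0 then inverse (trace (matrix_inv (info_matrix q x nu w))) else 0)"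
  unfolding h_obj_def f_obj_def ..

lemma hmin1:
  assumes "\<And>j. 0 \<le> w$j" "\<And>j. 0 \<le> nu j" "trace A = 1"
  shows "h_obj q x nu w \<le> LA q x nu A w"
proof (cases "det (info_matrix q x nu w) > 0")
  case True
  then have "invertible (info_matrix q x nu w)" using invertible_det_nz by force
  then show ?thesis unfolding h_obj_alt LA_def using True
    min1M[OF info_sym info_psd[OF assms(1,2)] _ assms(3)] by simp
next
  case False
  have "0 \<le> LA q x nu A w" unfolding LA_lin using assms
    by (intro sum_nonneg mult_nonneg_nonneg KA_nonneg) auto
  then show ?thesis unfolding h_obj_alt using False by simp
qed

lemma hmin2:
  assumes "\<And>j. 0 \<le> w$j" "\<And>j. 0 \<le> nu j"
  shows "\<exists>A. trace A = 1 \<and> LA q x nu A w = h_obj q x nu w"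
proof (cases "det (info_matrix q x nu w) > 0")
  case True
  then have "invertible (info_matrix q x nu w)" using invertible_det_nz by force
  note m = min2M_inv[OF info_sym info_psd[OF assms(1,2)] this]
  show ?thesis
    unfolding h_obj_alt LA_def using True m
    by (intro exI[of _ "(1 / trace (matrix_inv (info_matrix q x nu w))) *\<^sub>R matrix_inv (info_matrix q x nu w)"]) simp
next
  case False
  have "\<not> invertible (info_matrix q x nu w)"
  proof
    assume "invertible (info_matrix q x nu w)"
    then have "pd (info_matrix q x nu w)" using psd_inv_pd[OF info_sym[of q x nu w] info_psd[of w nu q x, OF assms(1,2)]] by blast
    then show False using pd_det_pos False by blast
  qed
  from min2M_sing[OF this] show ?thesis
    unfolding h_obj_alt LA_def using False by simp
qed

lemma simplex_nonneg: "w \<in> alloc_simplex \<Longrightarrow> 0 \<le> w$j"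
  unfolding alloc_simplex_def by auto

lemma simplex_sum: "w \<in> alloc_simplex \<Longrightarrow> (\<Sum>j\<in>UNIV. w$j) = 1"
  unfolding alloc_simplex_def by auto

lemma simplex_le1: "w \<in> alloc_simplex \<Longrightarrow> w$j \<le> 1"
  using member_le_sum[of j UNIV "\<lambda>j. w$j"] simplex_nonneg simplex_sum by fastforce

lemma orth_exists:
  fixes u :: "real^'p::finite"
  assumes "CARD('p) \<ge> 2"
  shows "\<exists>y. y \<noteq> 0 \<and> u \<bullet> y = 0"
proof -
  obtain k l :: 'p where kl: "k \<noteq> l"
  proof -
    have "\<not> (\<forall>k l::'p. k = l)"
    proof
      assume "\<forall>k l::'p. k = l"
      then have "(UNIV::'p set) \<subseteq> {undefined}" by auto
      then have "CARD('p) \<le> 1" using card_mono[of "{undefined}"] by fastforce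
      then show False using assms by simp
    qed
    then show ?thesis using that by blast
  qed
  define y where "y = u$l *\<^sub>R axis k 1 - u$k *\<^sub>R axis l (1::real)"
  show ?thesis
  proof (cases "y = 0")
    case True
    then have "y $ l = 0" by simp
    then have "u$k = 0" unfolding y_def using kl by (simp add: axis_def)
    then show ?thesis by (intro exI[of _ "axis k 1"]) (simp add: inner_axis axis_eq_0_iff)
  next
    case False
    have "u \<bullet> y = 0" unfolding y_def by (simp add: inner_diff_right inner_axis)
    then show ?thesis using False by blast
  qed
qed

lemma wi_lt1:
  fixes q :: "real^'d \<Rightarrow> real^'p" and x :: "'m::finite \<Rightarrow> real^'d"
  assumes w: "w \<in> alloc_simplex" and f: "f_obj q x nu w > 0" and p: "CARD('p) \<ge> 2"
  shows "w$i < 1"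
proof (rule ccontr)
  assume "\<not> w$i < 1"
  then have wi: "w$i = 1" using simplex_le1[OF w] by (meson linorder_not_less order_antisym)
  have "(\<Sum>j\<in>UNIV - {i}. w$j) = 0"
    using simplex_sum[OF w] sum.remove[of UNIV i "\<lambda>j. w$j"] wi by simp
  then have wj: "j \<noteq> i \<Longrightarrow> w$j = 0" for j
    using sum_nonneg_eq_0_iff[of "UNIV - {i}" "\<lambda>j. w$j"] simplex_nonneg[OF w] by auto
  obtain y :: "real^'p" where y: "y \<noteq> 0" "q (x i) \<bullet> y = 0" using orth_exists[OF p] by blast
  have "info_matrix q x nu w *v y = 0" unfolding info_mv
    by (rule sum.neutral) (metis wj y(2) mult_eq_0_iff scaleR_eq_0_iff)
  then have "\<not> invertible (info_matrix q x nu w)"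
    using inj_matrix_vector_mult y(1) by (metis injD matrix_vector_mult_0_right)
  then have "det (info_matrix q x nu w) = 0" using invertible_det_nz by blast
  then show False using f unfolding f_obj_def by simp
qed



lemma info_comb_mv:
  "info_matrix q x nu ((1-t) *\<^sub>R w + t *\<^sub>R axis i 1) *v y =
     (1-t) *\<^sub>R (info_matrix q x nu w *v y) + (t * nu i * (q (x i) \<bullet> y)) *\<^sub>R q (x i)"
proof -
  have "info_matrix q x nu ((1-t) *\<^sub>R w + t *\<^sub>R axis i 1) *v y =
     (\<Sum>j\<in>UNIV. ((1-t) * (w$j * nu j * (q (x j) \<bullet> y))) *\<^sub>R q (x j)) +
     (\<Sum>j\<in>UNIV. (if j = i then t * nu i * (q (x i) \<bullet> y) else 0) *\<^sub>R q (x j))"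
    unfolding info_mv sum.distrib[symmetric]
    by (rule sum.cong) (auto simp: axis_def algebra_simps)
  also have "\<dots> = (1-t) *\<^sub>R (info_matrix q x nu w *v y) + (t * nu i * (q (x i) \<bullet> y)) *\<^sub>R q (x i)"
    unfolding info_mv scaleR_sum_right by (simp add: if_distrib[where f="\<lambda>c. c *\<^sub>R _"] cong: if_cong)
  finally show ?thesis .
qed

lemma backward:
  fixes q :: "real^'d \<Rightarrow> real^'p" and x :: "'m::finite \<Rightarrow> real^'d"
  assumes w: "w \<in> alloc_simplex" and f: "f_obj q x nu w > 0" and nu: "\<And>j. 0 \<le> nu j"
    and p: "CARD('p) \<ge> 2"
    and cond: "\<forall>i. \<forall>z\<in>{0..1}. h_assoc q x nu w i z \<le> h_assoc q x nu w i (w $ i)"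
  shows "\<forall>v\<in>alloc_simplex. h_obj q x nu v \<le> h_obj q x nu w"
proof -
  define M where "M = info_matrix q x nu w"
  define P where "P = matrix_inv M"
  define T where "T = trace P"
  define As where "As = (1 / T) *\<^sub>R P"
  have w0: "\<And>j. 0 \<le> w$j" using simplex_nonneg[OF w] .
  have detM: "det M > 0" using f unfolding f_obj_def M_def .
  have inv: "invertible M" using detM invertible_det_nz by force
  have Msym: "transpose M = M" unfolding M_def by (rule info_sym)
  have Mpsd: "psd M" unfolding M_def using info_psd[OF w0 nu] .
  have pdM: "pd M" using psd_inv_pd[OF Msym Mpsd inv] .
  have Psym: "transpose P = P" unfolding P_def using inv_sym[OF Msym inv] .
  have pdP: "pd P" unfolding P_def using pd_inv[OF pdM] .
  have MP: "M ** P = mat 1" unfolding P_def using inv_props(1)[OF inv] .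
  have T0: "T > 0" unfolding T_def using pd_trace_pos[OF pdP] .
  have hw: "h_obj q x nu w = inverse T"
    unfolding h_obj_alt M_def[symmetric] P_def[symmetric] T_def[symmetric] using detM by simp
  have trAs: "trace As = 1" and LAw: "LA q x nu As w = inverse T"
    using min2M_inv[OF Msym Mpsd inv] unfolding As_def T_def P_def LA_def M_def by auto
  have Kle: "KA q x nu As i \<le> inverse T" for i
  proof (rule ccontr)
    assume Kgt: "\<not> KA q x nu As i \<le> inverse T"
    define qq where "qq = q (x i)"
    define u where "u = P *v qq"
    define a where "a = qq \<bullet> u"
    define bb where "bb = u \<bullet> u"
    define nn where "nn = nu i"
    have nn0: "0 \<le> nn" unfolding nn_def using nu .
    have a0: "0 \<le> a"
    proof (cases "qq = 0")
      case True then show ?thesis unfolding a_def by simp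
    next
      case False then show ?thesis using pdP unfolding pd_def a_def u_def by (simp add: less_imp_le)
    qed
    have qPe: "qq \<bullet> (P *v axis k 1) = u$k" for k
      using sym_inner[OF Psym, of qq "axis k 1"] unfolding u_def by (simp add: inner_axis)
    have KA_eq: "KA q x nu As i = nn * bb / T^2"
    proof -
      have "KA q x nu As i = nn * (\<Sum>k\<in>UNIV. (u$k / T)^2)"
        unfolding KA_def As_def nn_def qq_def[symmetric] scaleR_mv
        using qPe by (simp add: inner_commute[of _ qq])
      also have "\<dots> = nn * bb / T^2"
        unfolding bb_def inner_vec_def by (simp add: power_divide sum_divide_distrib[symmetric] power2_eq_square)
      finally show ?thesis .
    qed
    have big: "nn * bb > T"
    proof -
      have "inverse T < nn * bb / T^2" using Kgt KA_eq by simp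
      then have "inverse T * T^2 < nn * bb" using T0 by (simp add: field_simps)
      then show ?thesis using T0 by (simp add: power2_eq_square field_simps)
    qed
    have wi1: "w$i < 1" using wi_lt1[OF w f p] .
    have wi0: "0 \<le> w$i" using w0 .
    define c where "c = T * nn * a - T"
    define t where "t = min (1/2) ((nn * bb - T) / (2 * (\<bar>c\<bar> + 1)))"
    have t0: "0 < t" unfolding t_def using big by simp
    have t1: "t < 1" unfolding t_def by simp
    have key: "T + t * c < nn * bb"
    proof -
      have "t * c \<le> t * (\<bar>c\<bar> + 1)" using t0 by (intro mult_left_mono) auto
      also have "\<dots> \<le> (nn * bb - T) / (2 * (\<bar>c\<bar> + 1)) * (\<bar>c\<bar> + 1)"
        by (intro mult_right_mono) (auto simp: t_def)
      also have "\<dots> = (nn * bb - T) / 2" by (simp add: field_simps)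
      finally show ?thesis using big by argo
    qed
    define z where "z = w$i + t * (1 - w$i)"
    have z01: "z \<in> {0..1}"
    proof -
      have "0 \<le> t * (1 - w$i)" "0 \<le> (1 - t) * (1 - w$i)" using t0 t1 wi1 by simp_all
      then show ?thesis unfolding z_def using wi0 by (auto simp: algebra_simps)
    qed
    define v where "v = (1-t) *\<^sub>R w + t *\<^sub>R axis i (1::real)"
    have hv: "(\<chi> j. if j = i then z else (1 - z) / (1 - w$i) * w$j) = v"
    proof -
      have "(1 - z) / (1 - w$i) = 1 - t" unfolding z_def using wi1 by (simp add: field_simps)
      moreover have "z = (1 - t) * w$i + t" unfolding z_def by (simp add: algebra_simps)
      ultimately show ?thesis unfolding v_def by (simp add: vec_eq_iff axis_def)
    qed
    have hw': "(\<chi> j. if j = i then w$i else (1 - w$i) / (1 - w$i) * w$j) = w"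
      using wi1 by (simp add: vec_eq_iff)
    have hz: "h_assoc q x nu w i z = h_obj q x nu v" unfolding h_assoc_def hv ..
    have hwi: "h_assoc q x nu w i (w$i) = inverse T" unfolding h_assoc_def hw' hw ..
    define N where "N = info_matrix q x nu v"
    have Nmv: "N *v y = (1-t) *\<^sub>R (M *v y) + (t * nn * (qq \<bullet> y)) *\<^sub>R qq" for y
      unfolding N_def v_def M_def nn_def qq_def by (rule info_comb_mv)
    define D where "D = (1 - t) + t * nn * a"
    have D0: "D > 0" unfolding D_def using t0 t1 nn0 a0 by (simp add: add_pos_nonneg)
    define \<beta> where "\<beta> = t * nn / D"
    define X :: "real^'p^'p" where "X = (\<chi> r c. (P$r$c - \<beta> * u$r * u$c) / (1 - t))"
    have Xmv: "X *v y = (1/(1-t)) *\<^sub>R (P *v y - (\<beta> * (u \<bullet> y)) *\<^sub>R u)" for y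
      unfolding X_def
      by (simp add: vec_eq_iff matrix_vector_mult_def inner_vec_def sum_divide_distrib
          sum_subtractf sum_distrib_left algebra_simps diff_divide_distrib)
    have uy: "u \<bullet> y = qq \<bullet> (P *v y)" for y
      using sym_inner[OF Psym, of qq y] unfolding u_def by simp
    have Mu: "M *v u = qq" unfolding u_def by (simp add: matrix_vector_mul_assoc MP)
    have MPy: "M *v (P *v y) = y" for y by (simp add: matrix_vector_mul_assoc MP)
    have NX: "N *v (X *v y) = y" for y
    proof -
      define s where "s = u \<bullet> y"
      have e1: "M *v (X *v y) = (1/(1-t)) *\<^sub>R (y - (\<beta> * s) *\<^sub>R qq)"
        unfolding Xmv s_def
        by (simp add: matrix_vector_mult_scaleR matrix_vector_mult_diff_distrib MPy Mu)
      have e2: "qq \<bullet> (X *v y) = (1/(1-t)) * (s - \<beta> * s * a)"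
        unfolding Xmv s_def a_def by (simp add: inner_diff_right uy)
      have "N *v (X *v y) = (1-t) *\<^sub>R ((1/(1-t)) *\<^sub>R (y - (\<beta> * s) *\<^sub>R qq))
           + (t * nn * ((1/(1-t)) * (s - \<beta> * s * a))) *\<^sub>R qq"
        unfolding Nmv e1 e2 ..
      also have "\<dots> = y + (t * nn * ((1/(1-t)) * (s - \<beta> * s * a)) - \<beta> * s) *\<^sub>R qq"
      proof -
        have sc: "(1-t) *\<^sub>R ((1/(1-t)) *\<^sub>R V) = V" for V :: "real^'p" using t1 by simp
        show ?thesis unfolding sc by (simp add: algebra_simps)
      qed
      also have "t * nn * ((1/(1-t)) * (s - \<beta> * s * a)) - \<beta> * s = 0"
      proof -
        have "\<beta> * D = t * nn" unfolding \<beta>_def using D0 by simp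
        then have "t * nn * (1 - \<beta> * a) = \<beta> * (1 - t)" unfolding D_def by (simp add: algebra_simps)
        then have "t * nn * (s - \<beta> * s * a) = \<beta> * s * (1 - t)"
          by (metis (no_types, lifting) mult.commute mult.left_commute right_diff_distrib mult_1_right)
        then show ?thesis using t1 by (simp add: field_simps)
      qed
      finally show ?thesis by simp
    qed
    have NX1: "N ** X = mat 1"
      by (rule iffD2[OF matrix_eq]) (simp add: matrix_vector_mul_assoc[symmetric] NX)
    have Xinv: "matrix_inv N = X" using inv_unique(1)[OF NX1] .
    have pdN: "pd N" unfolding pd_def
    proof (intro allI impI)
      fix y :: "real^'p" assume y: "y \<noteq> 0"
      have "y \<bullet> (N *v y) = (1-t) * (y \<bullet> (M *v y)) + t * nn * (qq \<bullet> y)^2"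
        unfolding Nmv by (simp add: inner_add_right power2_eq_square inner_commute)
      moreover have "0 < (1-t) * (y \<bullet> (M *v y))" using pdM y t1 unfolding pd_def by simp
      moreover have "0 \<le> t * nn * (qq \<bullet> y)^2" using t0 nn0 by simp
      ultimately show "0 < y \<bullet> (N *v y)" by linarith
    qed
    have hv_eq: "h_obj q x nu v = inverse (trace X)"
      unfolding h_obj_alt N_def[symmetric] Xinv using pd_det_pos[OF pdN] by simp
    have trX: "trace X = (T - \<beta> * bb) / (1 - t)"
      unfolding X_def trace_def T_def bb_def inner_vec_def
      by (simp add: sum_divide_distrib[symmetric] sum_subtractf sum_distrib_left mult.assoc)
    have trX0: "trace X > 0" using pd_trace_pos[OF pd_inv[OF pdN]] Xinv by simp
    have trXT: "trace X < T"
    proof -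
      have "T * D < nn * bb" using key unfolding D_def c_def by (simp add: algebra_simps)
      then have "t * T * D < t * (nn * bb)" using t0 by simp
      then have "t * T < \<beta> * bb" unfolding \<beta>_def using D0 by (simp add: field_simps)
      then have "T - \<beta> * bb < (1 - t) * T" by (simp add: algebra_simps)
      then show ?thesis unfolding trX using t1 by (simp add: field_simps)
    qed
    have "inverse T < inverse (trace X)" using trX0 trXT by (simp add: less_imp_inverse_less)
    then have "h_assoc q x nu w i (w$i) < h_assoc q x nu w i z" unfolding hz hv_eq hwi .
    moreover have "h_assoc q x nu w i z \<le> h_assoc q x nu w i (w $ i)" using cond z01 by blast
    ultimately show False by linarith
  qed
  show ?thesis
  proof
    fix v :: "real^'m" assume v: "v \<in> alloc_simplex"
    have "h_obj q x nu v \<le> LA q x nu As v" using hmin1[OF simplex_nonneg[OF v] nu trAs] .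
    also have "\<dots> = (\<Sum>j\<in>UNIV. v$j * KA q x nu As j)" by (rule LA_lin)
    also have "\<dots> \<le> (\<Sum>j\<in>UNIV. v$j * inverse T)"
      by (intro sum_mono mult_left_mono Kle simplex_nonneg[OF v])
    also have "\<dots> = inverse T" using simplex_sum[OF v] by (simp add: sum_distrib_right[symmetric])
    finally show "h_obj q x nu v \<le> h_obj q x nu w" using hw by simp
  qed
qed



lemma simplex_comb:
  assumes "w1 \<in> alloc_simplex" "w2 \<in> alloc_simplex" "0 \<le> a" "0 \<le> b" "a + b = 1"
  shows "a *\<^sub>R w1 + b *\<^sub>R w2 \<in> alloc_simplex"
  using assms simplex_nonneg[OF assms(1)] simplex_nonneg[OF assms(2)]
    simplex_sum[OF assms(1)] simplex_sum[OF assms(2)]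
  unfolding alloc_simplex_def
  by (auto simp: sum.distrib sum_distrib_left[symmetric])

lemma conc:
  assumes w1: "w1 \<in> alloc_simplex" and w2: "w2 \<in> alloc_simplex" and nu: "\<And>j. 0 \<le> nu j"
    and ab: "0 \<le> a" "0 \<le> b" "a + b = 1"
  shows "a * h_obj q x nu w1 + b * h_obj q x nu w2 \<le> h_obj q x nu (a *\<^sub>R w1 + b *\<^sub>R w2)"
proof -
  have w: "a *\<^sub>R w1 + b *\<^sub>R w2 \<in> alloc_simplex" using simplex_comb[OF w1 w2 ab] .
  obtain A where A: "trace A = 1" "LA q x nu A (a *\<^sub>R w1 + b *\<^sub>R w2) = h_obj q x nu (a *\<^sub>R w1 + b *\<^sub>R w2)"
    using hmin2[where nu=nu and q=q and x=x, OF simplex_nonneg[OF w] nu] by blast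
  have "LA q x nu A (a *\<^sub>R w1 + b *\<^sub>R w2) = a * LA q x nu A w1 + b * LA q x nu A w2"
    unfolding LA_lin by (simp add: algebra_simps sum.distrib sum_distrib_left)
  moreover have "h_obj q x nu w1 \<le> LA q x nu A w1" using hmin1[where nu=nu and q=q and x=x, OF simplex_nonneg[OF w1] nu A(1)] .
  moreover have "h_obj q x nu w2 \<le> LA q x nu A w2" using hmin1[where nu=nu and q=q and x=x, OF simplex_nonneg[OF w2] nu A(1)] .
  ultimately show ?thesis using A(2) ab by (smt (verit) mult_left_mono)
qed

lemma convex_opt:
  fixes q :: "real^'d \<Rightarrow> real^'p" and x :: "'m::finite \<Rightarrow> real^'d"
  assumes nu: "\<And>j. 0 \<le> nu j"
  shows "convex {w. A_optimal q x nu w}"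
  unfolding convex_def
proof (intro ballI allI impI)
  fix w1 w2 :: "real^'m" and a b :: real
  assume o1: "w1 \<in> {w. A_optimal q x nu w}" and o2: "w2 \<in> {w. A_optimal q x nu w}"
    and ab: "0 \<le> a" "0 \<le> b" "a + b = 1"
  have s1: "w1 \<in> alloc_simplex" and s2: "w2 \<in> alloc_simplex" using o1 o2 unfolding A_optimal_def by auto
  have eq: "h_obj q x nu w1 = h_obj q x nu w2" using o1 o2 s1 s2 unfolding A_optimal_def
    by (auto intro: order_antisym)
  have "h_obj q x nu w1 = a * h_obj q x nu w1 + b * h_obj q x nu w2"
    using eq ab by (metis distrib_right mult_1)
  also have "\<dots> \<le> h_obj q x nu (a *\<^sub>R w1 + b *\<^sub>R w2)" by (rule conc[where nu=nu, OF s1 s2 nu ab])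
  finally have "h_obj q x nu w1 \<le> h_obj q x nu (a *\<^sub>R w1 + b *\<^sub>R w2)" .
  then show "a *\<^sub>R w1 + b *\<^sub>R w2 \<in> {w. A_optimal q x nu w}"
    using o1 simplex_comb[OF s1 s2 ab] unfolding A_optimal_def by force
qed

lemma simplex_compact: "compact (alloc_simplex :: (real^'m::finite) set)"
proof -
  have eq: "(alloc_simplex :: (real^'m) set) = {w. \<forall>i. 0 \<le> w$i} \<inter> {w. (\<Sum>i\<in>UNIV. w$i) = 1}"
    unfolding alloc_simplex_def by auto
  have c1: "closed {w :: real^'m. \<forall>i. 0 \<le> w$i}"
    by (intro closed_Collect_all closed_Collect_le continuous_intros)
  have c2: "closed {w :: real^'m. (\<Sum>i\<in>UNIV. w$i) = 1}"
    by (intro closed_Collect_eq continuous_intros)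
  have cl: "closed (alloc_simplex :: (real^'m) set)" unfolding eq using c1 c2 by (rule closed_Int)
  have bd: "bounded (alloc_simplex :: (real^'m) set)"
    unfolding bounded_iff
  proof (intro exI ballI)
    fix w :: "real^'m" assume w: "w \<in> alloc_simplex"
    have "norm w \<le> (\<Sum>i\<in>UNIV. \<bar>w$i\<bar>)" by (rule norm_le_l1_cart)
    also have "\<dots> = 1" using simplex_nonneg[OF w] simplex_sum[OF w] by simp
    finally show "norm w \<le> 1" .
  qed
  show ?thesis using cl bd compact_eq_bounded_closed by blast
qed

lemma exists_opt:
  fixes q :: "real^'d \<Rightarrow> real^'p" and x :: "'m::finite \<Rightarrow> real^'d"
  assumes nu: "\<And>j. 0 \<le> nu j"
  shows "\<exists>w. A_optimal q x nu w"
proof -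
  let ?S = "alloc_simplex :: (real^'m) set"
  let ?h = "h_obj q x nu"
  define w0 :: "real^'m" where "w0 = (\<chi> j. 1 / real CARD('m))"
  have w0S: "w0 \<in> ?S" unfolding alloc_simplex_def w0_def by simp
  then have Sne: "?S \<noteq> {}" by blast
  obtain A0 :: "real^'p^'p" where A0: "trace A0 = 1"
    using hmin2[where nu=nu and q=q and x=x, OF simplex_nonneg[OF w0S] nu] by blast
  define B where "B = (\<Sum>j\<in>UNIV. KA q x nu A0 j)"
  have hB: "?h w \<le> B" if w: "w \<in> ?S" for w
  proof -
    have "?h w \<le> LA q x nu A0 w" using hmin1[where nu=nu and q=q and x=x, OF simplex_nonneg[OF w] nu A0] .
    also have "\<dots> = (\<Sum>j\<in>UNIV. w$j * KA q x nu A0 j)" by (rule LA_lin)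
    also have "\<dots> \<le> B" unfolding B_def
      by (intro sum_mono mult_left_le_one_le KA_nonneg nu simplex_nonneg[OF w] simplex_le1[OF w])
    finally show ?thesis .
  qed
  have bdd: "bdd_above (?h ` ?S)" using hB by (auto intro!: bdd_aboveI)
  define s where "s = (SUP w\<in>?S. ?h w)"
  have "\<forall>n. \<exists>w\<in>?S. s - inverse (real (Suc n)) < ?h w"
  proof
    fix n
    have "s - inverse (real (Suc n)) < s" by simp
    then show "\<exists>w\<in>?S. s - inverse (real (Suc n)) < ?h w"
      using less_cSUP_iff[OF Sne bdd] unfolding s_def by blast
  qed
  then obtain f where f: "\<And>n. f n \<in> ?S" "\<And>n. s - inverse (real (Suc n)) < ?h (f n)"
    by metis
  obtain l r where l: "l \<in> ?S" "strict_mono (r :: nat \<Rightarrow> nat)" "(f \<circ> r) \<longlonglongrightarrow> l"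
    using seq_compactE[OF compact_imp_seq_compact[OF simplex_compact], of f] f(1) by blast
  have LAl: "s \<le> LA q x nu A l" if A: "trace A = 1" for A
  proof -
    have lim1: "(\<lambda>n. LA q x nu A (f (r n))) \<longlonglongrightarrow> LA q x nu A l"
      unfolding LA_lin using l(3) unfolding comp_def
      by (intro tendsto_intros)
    have lim2: "(\<lambda>n. s - inverse (real (Suc n))) \<longlonglongrightarrow> s"
      using tendsto_diff[OF tendsto_const LIMSEQ_inverse_real_of_nat, of s] by simp
    have "s - inverse (real (Suc n)) \<le> LA q x nu A (f (r n))" for n
    proof -
      have "n \<le> r n" using seq_suble[OF l(2)] .
      then have "inverse (real (Suc (r n))) \<le> inverse (real (Suc n))"
        by (intro le_imp_inverse_le) auto
      moreover have "s - inverse (real (Suc (r n))) < ?h (f (r n))" using f(2) .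
      moreover have "?h (f (r n)) \<le> LA q x nu A (f (r n))"
        using hmin1[where nu=nu and q=q and x=x, OF simplex_nonneg[OF f(1)] nu A] .
      ultimately show ?thesis by linarith
    qed
    then show ?thesis using LIMSEQ_le[OF lim2 lim1] by blast
  qed
  obtain Al where Al: "trace Al = 1" "LA q x nu Al l = ?h l"
    using hmin2[where nu=nu and q=q and x=x, OF simplex_nonneg[OF l(1)] nu] by blast
  have "s \<le> ?h l" using LAl[OF Al(1)] Al(2) by simp
  moreover have "?h v \<le> s" if "v \<in> ?S" for v unfolding s_def using cSUP_upper[OF that bdd] .
  ultimately have "A_optimal q x nu l" unfolding A_optimal_def using l(1) by force
  then show ?thesis by blast
qed

lemma forward:
  fixes q :: "real^'d \<Rightarrow> real^'p" and x :: "'m::finite \<Rightarrow> real^'d"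
  assumes w: "w \<in> alloc_simplex" and f: "f_obj q x nu w > 0" and p: "CARD('p) \<ge> 2"
    and opt: "A_optimal q x nu w"
  shows "\<forall>i. \<forall>z\<in>{0..1}. h_assoc q x nu w i z \<le> h_assoc q x nu w i (w $ i)"
proof (intro allI ballI)
  fix i z assume z: "z \<in> {0..(1::real)}"
  have wi1: "w$i < 1" using wi_lt1[OF w f p] .
  have hw': "(\<chi> j. if j = i then w$i else (1 - w$i) / (1 - w$i) * w$j) = w"
    using wi1 by (simp add: vec_eq_iff)
  define v :: "real^'m" where "v = (\<chi> j. if j = i then z else (1 - z) / (1 - w$i) * w$j)"
  have c0: "0 \<le> (1 - z) / (1 - w$i)" using z wi1 by simp
  have vS: "v \<in> alloc_simplex" unfolding alloc_simplex_def
  proof (intro CollectI conjI allI)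
    fix j
    have "0 \<le> (1 - z) / (1 - w$i) * w$j" using mult_nonneg_nonneg[OF c0 simplex_nonneg[OF w, of j]] .
    then show "0 \<le> v$j" unfolding v_def using z by (simp only: vec_lambda_beta split: if_split) simp
  next
    have "(\<Sum>j\<in>UNIV. v$j) = v$i + (\<Sum>j\<in>UNIV - {i}. v$j)" by (simp add: sum.remove)
    also have "(\<Sum>j\<in>UNIV - {i}. v$j) = (1 - z) / (1 - w$i) * (\<Sum>j\<in>UNIV - {i}. w$j)"
      unfolding v_def sum_distrib_left by (rule sum.cong) auto
    also have "(\<Sum>j\<in>UNIV - {i}. w$j) = 1 - w$i"
      using simplex_sum[OF w] sum.remove[of UNIV i "\<lambda>j. w$j"] by simp
    finally show "(\<Sum>j\<in>UNIV. v$j) = 1" unfolding v_def using wi1 by simp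
  qed
  have "h_assoc q x nu w i z = h_obj q x nu v" unfolding h_assoc_def v_def ..
  also have "\<dots> \<le> h_obj q x nu w" using opt vS unfolding A_optimal_def by blast
  also have "\<dots> = h_assoc q x nu w i (w $ i)" unfolding h_assoc_def hw' ..
  finally show "h_assoc q x nu w i z \<le> h_assoc q x nu w i (w $ i)" .
qed

theorem theorem3:
  fixes q :: "real^'d \<Rightarrow> real^'p"
    and x :: "'m::finite \<Rightarrow> real^'d"
    and nu :: "'m \<Rightarrow> real"
  assumes distinct_points: "inj x"
    and nu_nonneg: "\<And>i. 0 \<le> nu i"
    and m_gt_p: "CARD('m) > CARD('p)"
    and p_ge_2: "CARD('p) \<ge> 2"
  shows "(\<exists>w. A_optimal q x nu w)
       \<and> convex {w. A_optimal q x nu w}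
       \<and> (\<forall>w. w \<in> alloc_simplex \<and> f_obj q x nu w > 0 \<longrightarrow>
             (A_optimal q x nu w \<longleftrightarrow>
              (\<forall>i. \<forall>z\<in>{0..1}. h_assoc q x nu w i z \<le> h_assoc q x nu w i (w $ i))))"
proof (intro conjI allI impI)
  show "\<exists>w. A_optimal q x nu w" using exists_opt[where nu=nu and q=q and x=x, OF nu_nonneg] .
  show "convex {w. A_optimal q x nu w}" using convex_opt[where nu=nu and q=q and x=x, OF nu_nonneg] .
next
  fix w assume wf: "w \<in> alloc_simplex \<and> f_obj q x nu w > 0"
  show "A_optimal q x nu w \<longleftrightarrow>
              (\<forall>i. \<forall>z\<in>{0..1}. h_assoc q x nu w i z \<le> h_assoc q x nu w i (w $ i))"
  proof
    assume "A_optimal q x nu w"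
    then show "\<forall>i. \<forall>z\<in>{0..1}. h_assoc q x nu w i z \<le> h_assoc q x nu w i (w $ i)"
      using forward[OF conjunct1[OF wf] conjunct2[OF wf] p_ge_2] by blast
  next
    assume c: "\<forall>i. \<forall>z\<in>{0..1}. h_assoc q x nu w i z \<le> h_assoc q x nu w i (w $ i)"
    show "A_optimal q x nu w"
      unfolding A_optimal_def
      using backward[where nu=nu and q=q and x=x, OF conjunct1[OF wf] conjunct2[OF wf] nu_nonneg p_ge_2 c]
        wf by blast
  qed
qed

end
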